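(* Let $0<\theta<\pi$, let $P_\theta=\big(\frac{\theta+\sin\theta}{2},\cos^2\frac\theta2\big)$ (a point of $\Gamma_\theta$), and let $T_\theta$ be the tangent line to the curve $\Gamma_\theta$ at $P_\theta$. Then (1) $\inf_{P\in T_\theta\cap\mathcal{H}}d_H((0,1),P)=\theta$; and (2) $T_\theta$ is the line $x=\frac\theta2+v\tan\frac\theta2$, i.e. $T_\theta\cap\mathcal{H}=L_{\beta,\gamma}$ with $\beta=\frac\theta2$, $\gamma=\tan\frac\theta2$.
   Context: Let $\mathcal{H}=\{(x,v)\in\mathbb{R}^2:v\ge0\}$ and $d_H$ the Riemannian distance on $\mathcal{H}$ induced by $ds^2=v^{-1}(dx^2+dv^2)$ on the open upper half-plane (extended to the boundary). For $v\ge0$, $0<|\delta|<2\pi$, set $f(v,\delta)=\frac{(v+1)(\delta-\sin\delta)+2\sqrt v(2\sin\frac\delta2-\delta\cos\frac\delta2)}{2\sin^2\frac\delta2}$ and $f(v,0)=0$; $\delta(x,v)$ is the unique $\delta\in(-2\pi,2\pi)$ with $f(v,\delta)=x$, and $\Gamma_\theta=\{(x,v)\in\mathcal{H}:\delta(x,v)=\theta\}$. For $0<\theta<2\pi$, $\Gamma_\theta$ is the graph of a smooth function of $x$ on $[\frac{\theta-\sin\theta}{1-\cos\theta},\infty)$. $L_{\beta,\gamma}=\{(x,v)\in\mathcal{H}:x=\beta+\gamma v\}$. *)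

theory Defs
  imports "HOL-Analysis.Analysis"
begin

definition Hplane :: "(real \<times> real) set" where
  "Hplane = {p. snd p \<ge> 0}"

text \<open>Length of a curve g : [0,1] -> H for the metric ds^2 = v^{-1}(dx^2+dv^2),
  extended to the boundary v = 0 (moving along the boundary costs infinity,
  resting there costs nothing).\<close>
definition hlen :: "(real \<Rightarrow> real \<times> real) \<Rightarrow> ennreal" where
  "hlen g = (\<integral>\<^sup>+ t \<in> {0..1}.
      (let d = vector_derivative g (at t); v = snd (g t) in
        if v > 0 then ennreal (norm d / sqrt v)
        else if d = 0 then 0 else \<infinity>) \<partial>lborel)"

definition dH :: "real \<times> real \<Rightarrow> real \<times> real \<Rightarrow> ennreal" where
  "dH p q = (INF g \<in> {g. g piecewise_C1_differentiable_on {0..1} \<and> g 0 = p \<and> g 1 = q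
                          \<and> (\<forall>t\<in>{0..1}. g t \<in> Hplane)}. hlen g)"

definition fH :: "real \<Rightarrow> real \<Rightarrow> real" where
  "fH v d = (if d = 0 then 0 else
     ((v + 1) * (d - sin d) + 2 * sqrt v * (2 * sin (d/2) - d * cos (d/2)))
       / (2 * (sin (d/2))^2))"

definition deltaH :: "real \<times> real \<Rightarrow> real" where
  "deltaH p = (THE d. -2*pi < d \<and> d < 2*pi \<and> fH (snd p) d = fst p)"

definition Gamma :: "real \<Rightarrow> (real \<times> real) set" where
  "Gamma \<theta> = {p \<in> Hplane. deltaH p = \<theta>}"

text \<open>For 0 < theta < 2 pi, Gamma theta is the graph of a function of x; this is that function.\<close>
definition Gamma_fun :: "real \<Rightarrow> real \<Rightarrow> real" where
  "Gamma_fun \<theta> x = (THE v. (x, v) \<in> Gamma \<theta>)"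

definition Lline :: "real \<Rightarrow> real \<Rightarrow> (real \<times> real) set" where
  "Lline \<beta> \<gamma> = {(x, v). v \<ge> 0 \<and> x = \<beta> + \<gamma> * v}"

definition Ptheta :: "real \<Rightarrow> real \<times> real" where
  "Ptheta \<theta> = ((\<theta> + sin \<theta>) / 2, (cos (\<theta>/2))^2)"

definition tangent_line :: "real \<Rightarrow> (real \<times> real) set" where
  "tangent_line \<theta> = {(x, v). v = snd (Ptheta \<theta>)
      + deriv (Gamma_fun \<theta>) (fst (Ptheta \<theta>)) * (x - fst (Ptheta \<theta>))}"

end

theory Submission
  imports Defs "HOL-Real_Asymp.Real_Asymp"
begin

definition PP :: "real \<Rightarrow> real" where "PP u = (u - sin u * cos u) / (sin u)^2"
definition QQ :: "real \<Rightarrow> real" where "QQ u = (sin u - u * cos u) / (sin u)^2"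

lemma aux_div: "(A*(2*p) + B*(2*q))/(2*ww) = A*(p/ww) + B*(q/(ww::real))"
  by (simp add: add_divide_distrib)

lemma fH_alt: "d \<noteq> 0 \<Longrightarrow> fH v d = (v+1) * PP (d/2) + 2 * sqrt v * QQ (d/2)"
proof -
  assume "d \<noteq> 0"
  have sd: "sin d = 2 * sin (d/2) * cos (d/2)" using sin_double[of "d/2"] by simp
  have 1: "d - sin d = 2 * (d/2 - sin (d/2) * cos (d/2))" using sd by simp
  have 2: "2 * sin (d/2) - d * cos (d/2) = 2 * (sin (d/2) - d/2 * cos (d/2))" by simp
  have "fH v d = ((v + 1) * (2 * (d/2 - sin (d/2) * cos (d/2))) + (2 * sqrt v) * (2 * (sin (d/2) - d/2 * cos (d/2))))
       / (2 * (sin (d/2))^2)"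
    unfolding fH_def using \<open>d\<noteq>0\<close> by (simp only: 1 2 if_False mult.assoc)
  also have "\<dots> = (v+1) * PP (d/2) + 2 * sqrt v * QQ (d/2)"
    unfolding PP_def QQ_def by (rule aux_div)
  finally show ?thesis .
qed

lemma PP_deriv: "sin u \<noteq> 0 \<Longrightarrow> (PP has_real_derivative 2 * (sin u - u * cos u) / (sin u)^3) (at u)"
  unfolding PP_def[abs_def]
  apply (rule derivative_eq_intros refl)+
  subgoal by simp
  subgoal using sin_cos_squared_add[of u]
    apply (simp add: divide_simps)
    using sin_cos_squared_add[of u] by algebra
  done

lemma QQ_deriv: "sin u \<noteq> 0 \<Longrightarrow> (QQ has_real_derivative (u * (1 + (cos u)^2) - 2 * sin u * cos u) / (sin u)^3) (at u)"
  unfolding QQ_def[abs_def]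
  apply (rule derivative_eq_intros refl)+
  subgoal by simp
  subgoal using sin_cos_squared_add[of u]
    apply (simp add: divide_simps)
    using sin_cos_squared_add[of u] by algebra
  done

lemma sin_gt_ucos: "0 < u \<Longrightarrow> u < pi \<Longrightarrow> u * cos u < sin u"
proof -
  assume u: "0 < u" "u < pi"
  have "(\<lambda>t. sin t - t * cos t) 0 < (\<lambda>t. sin t - t * cos t) u"
  proof (rule DERIV_pos_imp_increasing_open[OF u(1)])
    fix t assume t: "0 < t" "t < u"
    show "\<exists>y. ((\<lambda>t. sin t - t * cos t) has_real_derivative y) (at t) \<and> 0 < y"
      using t u by (intro exI[of _ "t * sin t"]) (auto intro!: derivative_eq_intros mult_pos_pos sin_gt_zero)
  qed (intro continuous_intros)
  then show ?thesis by simp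
qed

lemma sin_lt_self: "0 < (u::real) \<Longrightarrow> sin u < u"
proof -
  assume u: "0 < u"
  show ?thesis
  proof (cases "u < pi")
    case True
    have "(\<lambda>t. t - sin t) 0 < (\<lambda>t. t - sin t) u"
    proof (rule DERIV_pos_imp_increasing_open[OF u(1)])
      fix t assume t: "0 < t" "t < u"
      have "cos t < 1" using t True cos_monotone_0_pi[of 0 t] by auto
      then show "\<exists>y. ((\<lambda>t. t - sin t) has_real_derivative y) (at t) \<and> 0 < y"
        by (intro exI[of _ "1 - cos t"]) (auto intro!: derivative_eq_intros)
    qed (intro continuous_intros)
    then show ?thesis by simp
  next
    case False
    then show ?thesis using sin_le_one[of u] pi_gt3 by linarith
  qed
qed

lemma B_pos: "0 < u \<Longrightarrow> u < pi \<Longrightarrow> 0 < u * (1 + (cos u)^2) - 2 * sin u * cos u"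
proof -
  assume u: "0 < u" "u < pi"
  have s: "0 < sin u" using u sin_gt_zero by auto
  show ?thesis
  proof (cases "cos u \<le> 0")
    case True
    then have "sin u * cos u \<le> 0" using s by (simp add: mult_nonneg_nonpos)
    moreover have "0 < u * (1 + (cos u)^2)" using u by (simp add: add_pos_nonneg)
    ultimately show ?thesis by linarith
  next
    case False
    have "2 * u * cos u \<le> u * (1 + (cos u)^2)"
    proof -
      have "0 \<le> u * (1 - cos u)^2" using u by simp
      then show ?thesis by (simp add: power2_eq_square algebra_simps)
    qed
    moreover have "2 * sin u * cos u < 2 * u * cos u"
      using sin_lt_self[OF u(1)] False by simp
    ultimately show ?thesis by linarith
  qed
qed

lemma PP_pos: "0 < u \<Longrightarrow> u < pi \<Longrightarrow> 0 < PP u"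
proof -
  assume u: "0 < u" "u < pi"
  have s: "0 < sin u" using u sin_gt_zero by auto
  have "sin u * cos u < u"
  proof (cases "cos u \<le> 0")
    case True then show ?thesis using s u by (smt (verit) mult_nonneg_nonpos)
  next
    case False
    have "sin u * cos u \<le> sin u" using s cos_le_one[of u] by (simp add: mult_left_le)
    then show ?thesis using sin_lt_self[OF u(1)] by linarith
  qed
  then show ?thesis unfolding PP_def using s by simp
qed

lemma QQ_pos: "0 < u \<Longrightarrow> u < pi \<Longrightarrow> 0 < QQ u"
proof -
  assume u: "0 < u" "u < pi"
  have s: "0 < sin u" using u sin_gt_zero by auto
  show ?thesis unfolding QQ_def using s sin_gt_ucos[OF u] by simp
qed

lemma PP_mono: "0 < u1 \<Longrightarrow> u1 < u2 \<Longrightarrow> u2 < pi \<Longrightarrow> PP u1 < PP u2"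
proof -
  assume u: "0 < u1" "u1 < u2" "u2 < pi"
  show ?thesis
  proof (rule DERIV_pos_imp_increasing[OF u(2)])
    fix t assume t: "u1 \<le> t" "t \<le> u2"
    then have t': "0 < t" "t < pi" using u by auto
    have s: "0 < sin t" using t' sin_gt_zero by auto
    show "\<exists>y. (PP has_real_derivative y) (at t) \<and> 0 < y"
      using PP_deriv[of t] s sin_gt_ucos[OF t'] by (intro exI[of _ "2 * (sin t - t * cos t) / (sin t)^3"]) auto
  qed
qed

lemma QQ_mono: "0 < u1 \<Longrightarrow> u1 < u2 \<Longrightarrow> u2 < pi \<Longrightarrow> QQ u1 < QQ u2"
proof -
  assume u: "0 < u1" "u1 < u2" "u2 < pi"
  show ?thesis
  proof (rule DERIV_pos_imp_increasing[OF u(2)])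
    fix t assume t: "u1 \<le> t" "t \<le> u2"
    then have t': "0 < t" "t < pi" using u by auto
    have s: "0 < sin t" using t' sin_gt_zero by auto
    show "\<exists>y. (QQ has_real_derivative y) (at t) \<and> 0 < y"
      using QQ_deriv[of t] s B_pos[OF t'] by (intro exI[of _ "(t * (1 + (cos t)^2) - 2 * sin t * cos t) / (sin t)^3"]) auto
  qed
qed

lemma PP_odd: "PP (-u) = - PP u" unfolding PP_def by (simp add: minus_divide_left)
lemma QQ_odd: "QQ (-u) = - QQ u" unfolding QQ_def by (simp add: minus_divide_left)

lemma fH_odd: "fH v (-d) = - fH v d"
proof (cases "d = 0")
  case True then show ?thesis by (simp add: fH_def)
next
  case False then show ?thesis using fH_alt[of d v] fH_alt[of "-d" v] PP_odd QQ_odd by simp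
qed

lemma fH_pos: "0 \<le> v \<Longrightarrow> 0 < d \<Longrightarrow> d < 2*pi \<Longrightarrow> 0 < fH v d"
proof -
  assume a: "0 \<le> v" "0 < d" "d < 2*pi"
  have "0 < PP (d/2)" "0 < QQ (d/2)" using PP_pos QQ_pos a by auto
  then show ?thesis using fH_alt[of d v] a by (simp add: add_pos_nonneg)
qed

lemma fH_mono: "0 \<le> v \<Longrightarrow> 0 < d1 \<Longrightarrow> d1 < d2 \<Longrightarrow> d2 < 2*pi \<Longrightarrow> fH v d1 < fH v d2"
proof -
  assume a: "0 \<le> v" "0 < d1" "d1 < d2" "d2 < 2*pi"
  have "PP (d1/2) < PP (d2/2)" "QQ (d1/2) < QQ (d2/2)" using PP_mono QQ_mono a by auto
  then have "(v+1) * PP (d1/2) < (v+1) * PP (d2/2)" "2 * sqrt v * QQ (d1/2) \<le> 2 * sqrt v * QQ (d2/2)"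
    using a by (auto intro: mult_left_mono)
  moreover have "fH v d1 = (v+1) * PP (d1/2) + 2 * sqrt v * QQ (d1/2)" "fH v d2 = (v+1) * PP (d2/2) + 2 * sqrt v * QQ (d2/2)"
    using fH_alt[of d1 v] fH_alt[of d2 v] a by auto
  ultimately show ?thesis by linarith
qed

lemma fH_inj: "0 \<le> v \<Longrightarrow> -2*pi < d1 \<Longrightarrow> d1 < 2*pi \<Longrightarrow> -2*pi < d2 \<Longrightarrow> d2 < 2*pi
   \<Longrightarrow> fH v d1 = fH v d2 \<Longrightarrow> d1 = d2"
proof -
  assume a: "0 \<le> v" "-2*pi < d1" "d1 < 2*pi" "-2*pi < d2" "d2 < 2*pi" "fH v d1 = fH v d2"
  have sgn: "\<And>d. -2*pi < d \<Longrightarrow> d < 2*pi \<Longrightarrow> (0 < fH v d \<longleftrightarrow> 0 < d) \<and> (fH v d < 0 \<longleftrightarrow> d < 0)"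
  proof -
    fix d :: real assume d: "-2*pi < d" "d < 2*pi"
    consider "0 < d" | "d = 0" | "d < 0" by linarith
    then show "(0 < fH v d \<longleftrightarrow> 0 < d) \<and> (fH v d < 0 \<longleftrightarrow> d < 0)"
    proof cases
      case 1 then show ?thesis using fH_pos[OF a(1) 1 d(2)] by auto
    next
      case 2 then show ?thesis by (simp add: fH_def)
    next
      case 3 then show ?thesis using fH_pos[OF a(1), of "-d"] d fH_odd[of v d] by auto
    qed
  qed
  have mono: "\<And>e1 e2. 0 < e1 \<Longrightarrow> e1 < 2*pi \<Longrightarrow> 0 < e2 \<Longrightarrow> e2 < 2*pi \<Longrightarrow> fH v e1 = fH v e2 \<Longrightarrow> e1 = e2"
    using fH_mono[OF a(1)] by (metis less_irrefl linorder_neqE_linordered_idom)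
  consider "0 < d1" | "d1 = 0" | "d1 < 0" by linarith
  then show "d1 = d2"
  proof cases
    case 1
    then have "0 < d2" using sgn a by metis
    then show ?thesis using mono 1 a by auto
  next
    case 2
    then have "fH v d2 = 0" using a by (simp add: fH_def)
    then show ?thesis using sgn[of d2] a 2 by force
  next
    case 3
    then have "d2 < 0" using sgn a by metis
    then show ?thesis using mono[of "-d1" "-d2"] 3 a fH_odd[of v d1] fH_odd[of v d2] by auto
  qed
qed

lemma PP_lim0: "(PP \<longlongrightarrow> 0) (at_right 0)"
proof -
  have "((\<lambda>u::real. (u - sin u * cos u) / (sin u)^2) \<longlongrightarrow> 0) (at_right 0)" by real_asymp
  then show ?thesis unfolding PP_def[abs_def] .
qed
lemma QQ_lim0: "(QQ \<longlongrightarrow> 0) (at_right 0)"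
proof -
  have "((\<lambda>u::real. (sin u - u * cos u) / (sin u)^2) \<longlongrightarrow> 0) (at_right 0)" by real_asymp
  then show ?thesis unfolding QQ_def[abs_def] .
qed
lemma PP_limpi: "filterlim PP at_top (at_left pi)"
proof -
  have "filterlim (\<lambda>u::real. (u - sin u * cos u) / (sin u)^2) at_top (at_left pi)" by real_asymp
  then show ?thesis unfolding PP_def[abs_def] .
qed

lemma PP_cont: "0 < a \<Longrightarrow> b < pi \<Longrightarrow> continuous_on {a..b} PP"
  unfolding PP_def[abs_def]
proof (intro continuous_intros ballI)
  fix u assume "0 < a" "b < pi" "u \<in> {a..b}"
  then have "0 < sin u" by (intro sin_gt_zero) auto
  then show "(sin u)^2 \<noteq> 0" by simp
qed
lemma QQ_cont: "0 < a \<Longrightarrow> b < pi \<Longrightarrow> continuous_on {a..b} QQ"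
  unfolding QQ_def[abs_def]
proof (intro continuous_intros ballI)
  fix u assume "0 < a" "b < pi" "u \<in> {a..b}"
  then have "0 < sin u" by (intro sin_gt_zero) auto
  then show "(sin u)^2 \<noteq> 0" by simp
qed

lemma fH_surj_pos:
  assumes v: "0 \<le> v" and x: "0 < x"
  shows "\<exists>d. 0 < d \<and> d < 2*pi \<and> fH v d = x"
proof -
  define F where "F u = (v+1) * PP u + 2 * sqrt v * QQ u" for u
  have "(F \<longlongrightarrow> (v+1) * 0 + 2 * sqrt v * 0) (at_right 0)"
    unfolding F_def[abs_def] by (intro tendsto_intros PP_lim0 QQ_lim0)
  then have "eventually (\<lambda>u. F u < x) (at_right 0)" using x by (simp add: order_tendstoD(2))
  then obtain b where b: "b > 0" "\<And>y. y > 0 \<Longrightarrow> y < b \<Longrightarrow> F y < x"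
    unfolding eventually_at_right_field by auto
  define u1 where "u1 = min b pi / 2"
  have u1: "0 < u1" "u1 < pi" "F u1 < x" using b pi_gt_zero unfolding u1_def
    by (auto intro!: b(2) simp: min_def)
  have "eventually (\<lambda>u. x < PP u) (at_left pi)" using PP_limpi by (simp add: filterlim_at_top_dense)
  then obtain c where c: "c < pi" "\<And>y. y > c \<Longrightarrow> y < pi \<Longrightarrow> x < PP y"
    unfolding eventually_at_left_field by auto
  define u2 where "u2 = (max u1 c + pi) / 2"
  have u2: "u1 < u2" "u2 < pi" "c < u2" using u1 c unfolding u2_def by auto
  have "x < PP u2" using c u2 by auto
  moreover have "0 < PP u2" "0 < QQ u2" using PP_pos QQ_pos u1 u2 by auto
  ultimately have "x \<le> F u2" unfolding F_def using v
    by (smt (verit, best) mult_nonneg_nonneg real_sqrt_ge_zero mult_le_cancel_right1)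
  moreover have "continuous_on {u1..u2} F" unfolding F_def
    using PP_cont[of u1 u2] QQ_cont[of u1 u2] u1 u2 by (intro continuous_intros) auto
  ultimately obtain u where u: "u1 \<le> u" "u \<le> u2" "F u = x"
    using IVT'[of F u1 x u2] u1 u2 by auto
  show ?thesis
    using u u1 u2 fH_alt[of "2*u" v] unfolding F_def by (intro exI[of _ "2*u"]) auto
qed

lemma fH_surj:
  assumes v: "0 \<le> v"
  shows "\<exists>d. -2*pi < d \<and> d < 2*pi \<and> fH v d = x"
proof -
  consider "0 < x" | "x = 0" | "x < 0" by linarith
  then show ?thesis
  proof cases
    case 1 then show ?thesis using fH_surj_pos[OF v 1] by force
  next
    case 2 then show ?thesis by (intro exI[of _ 0]) (simp add: fH_def)
  next
    case 3
    then obtain d where "0 < d" "d < 2*pi" "fH v d = -x" using fH_surj_pos[OF v, of "-x"] by auto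
    then show ?thesis using fH_odd[of v d] by (intro exI[of _ "-d"]) auto
  qed
qed

lemma deltaH_eq:
  assumes "0 \<le> v" "-2*pi < d" "d < 2*pi" "fH v d = x"
  shows "deltaH (x, v) = d"
  unfolding deltaH_def using assms fH_inj[OF assms(1)]
  by (intro the_equality) auto

lemma deltaH_iff:
  assumes "0 \<le> v" "-2*pi < t" "t < 2*pi"
  shows "deltaH (x, v) = t \<longleftrightarrow> fH v t = x"
proof
  assume "fH v t = x" then show "deltaH (x, v) = t" using deltaH_eq assms by auto
next
  assume h: "deltaH (x, v) = t"
  obtain d where d: "-2*pi < d" "d < 2*pi" "fH v d = x" using fH_surj[OF assms(1)] by blast
  then have "deltaH (x,v) = d" using deltaH_eq assms by auto
  then show "fH v t = x" using h d by simp
qed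

locale th = fixes \<theta> :: real assumes th0: "0 < \<theta>" and thpi: "\<theta> < pi"
begin

definition "ss = sin (\<theta>/2)"
definition "cc = cos (\<theta>/2)"
definition "aa = PP (\<theta>/2)"
definition "bb = 2 * QQ (\<theta>/2)"
definition "xP = (\<theta> + sin \<theta>) / 2"

lemma ss_pos: "0 < ss" unfolding ss_def using th0 thpi by (intro sin_gt_zero) auto
lemma cc_pos: "0 < cc" unfolding cc_def using th0 thpi by (intro cos_gt_zero) auto
lemma sc1: "ss^2 + cc^2 = 1" unfolding ss_def cc_def by simp
lemma aa_pos: "0 < aa" unfolding aa_def using th0 thpi by (intro PP_pos) auto
lemma bb_pos: "0 < bb" unfolding bb_def using th0 thpi QQ_pos[of "\<theta>/2"] by auto
lemma sin_th: "sin \<theta> = 2 * ss * cc" unfolding ss_def cc_def using sin_double[of "\<theta>/2"] by simp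
lemma xP_eq: "xP = \<theta>/2 + ss * cc" unfolding xP_def sin_th by simp
lemma aa_eq: "aa = (\<theta>/2 - ss*cc) / ss^2" unfolding aa_def PP_def ss_def cc_def ..
lemma bb_eq: "bb = 2 * (ss - \<theta>/2*cc) / ss^2" unfolding bb_def QQ_def ss_def cc_def by simp

lemma fH_th: "fH v \<theta> = aa * (v+1) + bb * sqrt v"
  using fH_alt[of \<theta> v] th0 unfolding aa_def bb_def by simp

lemma key1: "aa * (cc^2 + 1) + bb * cc = xP"
  unfolding aa_eq bb_eq xP_eq using ss_pos sc1
  apply (simp add: divide_simps)
  using sc1 by algebra

lemma key2: "2 * aa * cc + bb = 2 * ss"
  unfolding aa_eq bb_eq using ss_pos sc1
  apply (simp add: divide_simps)
  using sc1 by algebra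

lemma Ptheta_Gamma: "Ptheta \<theta> \<in> Gamma \<theta>"
proof -
  have "fH (cc^2) \<theta> = xP" using fH_th key1 cc_pos by simp
  then show ?thesis unfolding Gamma_def Ptheta_def Hplane_def
    using deltaH_iff[of "cc^2" \<theta> xP] th0 thpi unfolding xP_def cc_def by auto
qed

lemma quad_root: "a \<noteq> 0 \<Longrightarrow> t^2 = b^2 + 4*a*(x-a) \<Longrightarrow> a*((-b+t)/(2*a))^2 + b*((-b+t)/(2*a)) + a - x = (0::real)"
  apply (simp add: divide_simps power2_eq_square)
  by algebra

definition "RR x = (- bb + sqrt (bb^2 + 4 * aa * (x - aa))) / (2 * aa)"

lemma Gamma_iff: "0 \<le> v \<Longrightarrow> (x, v) \<in> Gamma \<theta> \<longleftrightarrow> aa * (v+1) + bb * sqrt v = x"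
  unfolding Gamma_def Hplane_def using deltaH_iff[of v \<theta> x] th0 thpi fH_th by auto

lemma RR_root: assumes "aa \<le> x" shows "0 \<le> RR x" "aa * (RR x)^2 + bb * RR x + aa - x = 0"
proof -
  have d: "0 \<le> bb^2 + 4 * aa * (x - aa)" using assms aa_pos by simp
  have "bb \<le> sqrt (bb^2 + 4 * aa * (x - aa))"
    using assms aa_pos bb_pos by (intro real_le_rsqrt) simp
  then show "0 \<le> RR x" unfolding RR_def using aa_pos by simp
  have sq: "(sqrt (bb^2 + 4 * aa * (x - aa)))^2 = bb^2 + 4 * aa * (x - aa)" using d by simp
  show "aa * (RR x)^2 + bb * RR x + aa - x = 0" unfolding RR_def
    using quad_root[OF _ sq] aa_pos by simp
qed

lemma quad_mono: "0 \<le> r1 \<Longrightarrow> r1 < r2 \<Longrightarrow> aa * r1^2 + bb * r1 < aa * r2^2 + bb * r2"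
proof -
  assume r: "0 \<le> r1" "r1 < r2"
  have "r1^2 \<le> r2^2" using r by (intro power_mono) auto
  then have "aa * r1^2 \<le> aa * r2^2" using aa_pos by simp
  moreover have "bb * r1 < bb * r2" using bb_pos r by simp
  ultimately show ?thesis by linarith
qed

lemma Gamma_fun_eq: assumes "aa \<le> x" shows "Gamma_fun \<theta> x = (RR x)^2"
  unfolding Gamma_fun_def
proof (rule the_equality)
  show "(x, (RR x)^2) \<in> Gamma \<theta>" using Gamma_iff RR_root[OF assms] by (simp add: algebra_simps)
next
  fix v assume v: "(x, v) \<in> Gamma \<theta>"
  then have v0: "0 \<le> v" unfolding Gamma_def Hplane_def by auto
  have e1: "aa * (sqrt v)^2 + bb * sqrt v = x - aa" using Gamma_iff[OF v0] v v0 by (simp add: algebra_simps)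
  have e2: "aa * (RR x)^2 + bb * RR x = x - aa" using RR_root[OF assms] by simp
  have "sqrt v = RR x"
    using quad_mono[of "sqrt v" "RR x"] quad_mono[of "RR x" "sqrt v"] e1 e2 RR_root(1)[OF assms]
    by (metis linorder_neqE_linordered_idom real_sqrt_ge_zero v0 less_irrefl)
  then show "v = (RR x)^2" using v0 by (metis real_sqrt_pow2)
qed

lemma xP_gt: "aa < xP"
proof -
  have "0 < bb*cc" "0 \<le> aa*cc^2" using aa_pos bb_pos cc_pos by auto
  moreover have "xP = aa + aa*cc^2 + bb*cc" using key1 by (simp add: algebra_simps)
  ultimately show ?thesis by linarith
qed

lemma RR_xP: "RR xP = cc"
proof -
  have "aa \<le> xP" using xP_gt by simp
  have "aa * cc^2 + bb * cc = xP - aa" using key1 by (simp add: algebra_simps)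
  moreover have "aa * (RR xP)^2 + bb * RR xP = xP - aa" using RR_root[OF \<open>aa \<le> xP\<close>] by simp
  ultimately show ?thesis
    using quad_mono[of cc "RR xP"] quad_mono[of "RR xP" cc] RR_root(1)[OF \<open>aa \<le> xP\<close>] cc_pos
    by (metis linorder_neqE_linordered_idom less_irrefl less_imp_le)
qed

lemma Gamma_fun_deriv: "(Gamma_fun \<theta> has_real_derivative cc / ss) (at xP)"
proof -
  define q where "q = bb^2 + 4 * aa * (xP - aa)"
  have q0: "0 < q" unfolding q_def using xP_gt aa_pos bb_pos by (simp add: add_pos_nonneg)
  have sq: "sqrt q = 2 * aa * cc + bb"
  proof -
    have "RR xP = cc" by (rule RR_xP)
    then have "sqrt q = 2 * aa * cc + bb" unfolding RR_def q_def using aa_pos by (simp add: field_simps)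
    then show ?thesis .
  qed
  have dq: "((\<lambda>x. bb^2 + 4*aa*(x-aa)) has_real_derivative 4*aa) (at xP)"
    by (auto intro!: derivative_eq_intros)
  have ds: "((\<lambda>x. sqrt (bb^2 + 4*aa*(x-aa))) has_real_derivative inverse (sqrt q) / 2 * (4*aa)) (at xP)"
  proof -
    have "(sqrt has_real_derivative inverse (sqrt q) / 2) (at (bb^2 + 4*aa*(xP-aa)))"
      using DERIV_real_sqrt[OF q0] unfolding q_def .
    from DERIV_chain2[OF this dq] show ?thesis .
  qed
  have "((\<lambda>x. (- bb + sqrt (bb^2 + 4*aa*(x-aa))) / (2*aa)) has_real_derivative (0 + inverse (sqrt q) / 2 * (4*aa)) / (2*aa)) (at xP)"
    by (rule DERIV_cdivide, rule DERIV_add[OF DERIV_const ds])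
  moreover have "(0 + inverse (sqrt q) / 2 * (4*aa)) / (2*aa) = inverse (sqrt q)" using aa_pos by simp
  ultimately have dR: "(RR has_real_derivative inverse (sqrt q)) (at xP)"
    unfolding RR_def[abs_def] by simp
  have "((\<lambda>x. (RR x)^2) has_real_derivative of_nat 2 * (inverse (sqrt q) * RR xP ^ (2 - Suc 0))) (at xP)"
    by (rule DERIV_power[OF dR])
  also have "of_nat 2 * (inverse (sqrt q) * RR xP ^ (2 - Suc 0)) = cc / ss"
    unfolding RR_xP sq key2 using ss_pos by (simp add: field_simps)
  finally have d: "((\<lambda>x. (RR x)^2) has_real_derivative cc / ss) (at xP)" .
  show ?thesis
    by (rule has_field_derivative_transform_within_open[OF d, of "{aa<..}"])
       (use xP_gt Gamma_fun_eq in auto)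
qed

lemma fst_P: "fst (Ptheta \<theta>) = xP" unfolding Ptheta_def xP_def by simp
lemma snd_P: "snd (Ptheta \<theta>) = cc^2" unfolding Ptheta_def cc_def by simp

lemma deriv_G: "deriv (Gamma_fun \<theta>) (fst (Ptheta \<theta>)) = cc / ss"
  unfolding fst_P by (rule DERIV_imp_deriv[OF Gamma_fun_deriv])

lemma diff_G: "Gamma_fun \<theta> differentiable (at (fst (Ptheta \<theta>)))"
  unfolding fst_P using Gamma_fun_deriv real_differentiable_def differentiable_def
  by (metis has_field_derivative_imp_has_derivative)

lemma line_eq_aux: "v = cc^2 + cc/ss * (x - xP) \<longleftrightarrow> x = \<theta>/2 + ss/cc * v"
proof -
  have "v = cc^2 + cc/ss * (x - xP) \<longleftrightarrow> v = cc/ss * (x - \<theta>/2)"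
    unfolding xP_eq using ss_pos by (simp add: field_simps power2_eq_square)
  also have "\<dots> \<longleftrightarrow> x = \<theta>/2 + ss/cc * v"
    using ss_pos cc_pos by (auto simp: field_simps)
  finally show ?thesis .
qed

lemma tangent_eq: "tangent_line \<theta> \<inter> Hplane = Lline (\<theta>/2) (tan (\<theta>/2))"
proof -
  have t: "tan (\<theta>/2) = ss / cc" unfolding ss_def cc_def tan_def ..
  show ?thesis
    unfolding tangent_line_def Hplane_def Lline_def deriv_G snd_P t unfolding fst_P
    using line_eq_aux by auto
qed

end

lemma hk_le_nn:
  fixes f :: "real \<Rightarrow> real" and w :: "real \<Rightarrow> ennreal"
  assumes I: "(f has_integral I) {a..b}" and N: "finite N"
    and le: "\<And>x. x \<in> {a..b} - N \<Longrightarrow> ennreal (f x) \<le> w x"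
  shows "ennreal I \<le> (\<integral>\<^sup>+ x \<in> {a..b}. w x \<partial>lborel)"
proof -
  define fi where "fi x = indicator {a..b} x * f x" for x
  define p where "p x = max (fi x) 0" for x
  have "fi = (\<lambda>x. if x \<in> {a..b} then f x else 0)" by (auto simp: fi_def indicator_def)
  then have fiI: "(fi has_integral I) UNIV"
    using has_integral_restrict_UNIV[of "{a..b}" f I] I by simp
  have "(\<lambda>x. indicator {a..b} x *\<^sub>R f x) \<in> lebesgue \<rightarrow>\<^sub>M borel"
    by (rule has_integral_implies_lebesgue_measurable[OF I])
  then have fim: "fi \<in> borel_measurable lebesgue" unfolding fi_def by simp
  then have pm: "p \<in> borel_measurable lebesgue" unfolding p_def by measurable
  have p0: "\<And>x. 0 \<le> p x" unfolding p_def by simp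
  have AE: "AE x in lborel. ennreal (p x) \<le> w x * indicator {a..b} x"
  proof -
    have "AE x in lborel. x \<notin> N" using finite_imp_null_set_lborel[OF N] AE_not_in by blast
    then show ?thesis
    proof (rule eventually_mono)
      fix x assume "x \<notin> N"
      show "ennreal (p x) \<le> w x * indicator {a..b} x"
      proof (cases "x \<in> {a..b}")
        case True
        then have "ennreal (f x) \<le> w x" using le \<open>x \<notin> N\<close> by auto
        moreover have "ennreal (p x) = ennreal (f x)" using True unfolding p_def fi_def
          by (cases "f x \<ge> 0") (auto simp: ennreal_neg max_def)
        ultimately show ?thesis using True by simp
      next
        case False then show ?thesis unfolding p_def fi_def by simp
      qed
    qed
  qed
  have mono: "(\<integral>\<^sup>+ x. ennreal (p x) \<partial>lborel) \<le> (\<integral>\<^sup>+ x \<in> {a..b}. w x \<partial>lborel)"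
    by (rule nn_integral_mono_AE[OF AE])
  show ?thesis
  proof (cases "(\<integral>\<^sup>+ x. ennreal (p x) \<partial>lborel) = \<infinity>")
    case True
    then show ?thesis using mono by (simp add: top_unique)
  next
    case False
    then obtain r where r: "(\<integral>\<^sup>+ x. ennreal (p x) \<partial>lborel) = ennreal r" "0 \<le> r"
      by (cases "(\<integral>\<^sup>+ x. ennreal (p x) \<partial>lborel)" rule: ennreal_cases) auto
    have "(\<integral>\<^sup>+ x. ennreal (p x) \<partial>lebesgue) = ennreal r"
      using r by (simp add: nn_integral_completion)
    then have "(p has_integral r) UNIV"
      using has_integral_iff_nn_integral_lebesgue[of p r] p0 pm r(2) by simp
    then have "I \<le> r" by (rule has_integral_le[OF fiI]) (simp add: p_def)
    then have "ennreal I \<le> ennreal r" by (rule ennreal_leI)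
    then show ?thesis using mono r by (metis order_trans)
  qed
qed

context th begin

lemma alg1: "s^2 + c^2 = 1 \<Longrightarrow> ((2 + (c^2*2 - s^2 * 2)) * (2*c^2) + (A + 2 * s * c)*(4*(s * c)))*c^3 = (2*c + A * s)*(4*(c::real)^4)"
proof -
  assume h: "s^2 + c^2 = 1"
  have "((2 + (c^2*2 - s^2 * 2)) * (2*c^2) + (A + 2 * s * c)*(4*(s * c)))*c^3 - (2*c + A * s)*(4*(c::real)^4) = 4*c^5*(s^2+c^2-1)"
    by (simp add: algebra_simps power2_eq_square power3_eq_cube power4_eq_xxxx numeral_eq_Suc)
  then show ?thesis using h by simp
qed


definition "SS w = (2*w - \<theta> + sin (2*w)) / (2*(cos w)^2)"
definition "KK w = 2 * cos w + (2*w - \<theta>) * sin w"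

lemma cos_pos': "-pi/2 < w \<Longrightarrow> w < pi/2 \<Longrightarrow> 0 < cos w"
  by (rule cos_gt_zero_pi) auto

lemma KK_pos: assumes "-pi/2 < w" "w < pi/2" shows "0 < KK w"
proof -
  have c: "0 < cos w" using cos_pos' assms by auto
  consider "w \<le> 0" | "0 < w" "\<theta> \<le> 2*w" | "0 < w" "2*w < \<theta>" by linarith
  then show ?thesis
  proof cases
    case 1
    have "sin w \<le> 0" using sin_ge_zero[of "-w"] 1 assms by simp
    then have "0 \<le> (2*w - \<theta>) * sin w" using 1 th0 by (simp add: mult_nonpos_nonpos)
    then show ?thesis unfolding KK_def using c by simp
  next
    case 2
    have "0 < sin w" using 2 assms by (intro sin_gt_zero) auto
    then have "0 \<le> (2*w - \<theta>) * sin w" using 2 by simp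
    then show ?thesis unfolding KK_def using c by simp
  next
    case 3
    define u where "u = pi/2 - w"
    have u: "0 < u" "u < pi" using assms 3 unfolding u_def by auto
    have sw1: "sin w = cos u" unfolding u_def by (simp add: cos_diff)
    have sw2: "cos w = sin u" unfolding u_def by (simp add: sin_diff)
    note sw = sw1 sw2
    have spos: "0 < sin w" using 3 assms by (intro sin_gt_zero) auto
    have "(\<theta> - 2*w) * sin w < (pi - 2*w) * sin w" using spos thpi by simp
    also have "\<dots> = 2 * (u * cos u)" by (simp only: sw1[symmetric]) (simp add: u_def algebra_simps)
    also have "\<dots> < 2 * sin u" using sin_gt_ucos[OF u] by simp
    finally show ?thesis unfolding KK_def sw(2) by (simp add: algebra_simps)
  qed
qed

lemma SS_deriv: assumes "-pi/2 < w" "w < pi/2"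
  shows "(SS has_real_derivative KK w / (cos w)^3) (at w)"
proof -
  have c: "cos w \<noteq> 0" using cos_pos' assms by (simp add: less_imp_neq[symmetric])
  show ?thesis
    unfolding SS_def[abs_def]
    apply (rule derivative_eq_intros refl)+
    subgoal using c by simp
    subgoal
      unfolding KK_def sin_double cos_double using c
      apply (simp add: divide_simps)
      using alg1[of "sin w" "cos w" "2*w - \<theta>"] by simp
    done
qed

lemma SS_mono: "-pi/2 < w1 \<Longrightarrow> w1 < w2 \<Longrightarrow> w2 < pi/2 \<Longrightarrow> SS w1 < SS w2"
proof -
  assume w: "-pi/2 < w1" "w1 < w2" "w2 < pi/2"
  show ?thesis
  proof (rule DERIV_pos_imp_increasing[OF w(2)])
    fix t assume t: "w1 \<le> t" "t \<le> w2"
    then have t': "-pi/2 < t" "t < pi/2" using w by auto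
    show "\<exists>y. (SS has_real_derivative y) (at t) \<and> 0 < y"
      using SS_deriv[OF t'] KK_pos[OF t'] cos_pos'[OF t'] by (intro exI[of _ "KK t / (cos t)^3"]) auto
  qed
qed

lemma SS_isCont: "-pi/2 < w \<Longrightarrow> w < pi/2 \<Longrightarrow> isCont SS w"
  using SS_deriv DERIV_isCont by blast

lemma SS_lim_bot: "filterlim SS at_bot (at_right (-pi/2))"
proof -
  have npt: "-pi < \<theta>" using th0 pi_gt_zero by linarith
  have t: "((\<lambda>w. 2*w - \<theta> + sin (2*w)) \<longlongrightarrow> 2*(-pi/2) - \<theta> + sin (2*(-pi/2))) (at_right (-pi/2))"
    by (intro tendsto_intros)
  have l: "filterlim (\<lambda>w::real. 1 / (2*(cos w)^2)) at_top (at_right (-pi/2))" by real_asymp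
  have "filterlim (\<lambda>w. (2*w - \<theta> + sin (2*w)) * (1 / (2*(cos w)^2))) at_bot (at_right (-pi/2))"
    by (rule filterlim_tendsto_neg_mult_at_bot[OF t _ l]) (use npt in simp)
  then show ?thesis unfolding SS_def[abs_def] by simp
qed

lemma SS_lim_top: "filterlim SS at_top (at_left (pi/2))"
proof -
  have t: "((\<lambda>w. 2*w - \<theta> + sin (2*w)) \<longlongrightarrow> 2*(pi/2) - \<theta> + sin (2*(pi/2))) (at_left (pi/2))"
    by (intro tendsto_intros)
  have l: "filterlim (\<lambda>w::real. 1 / (2*(cos w)^2)) at_top (at_left (pi/2))" by real_asymp
  have "filterlim (\<lambda>w. (2*w - \<theta> + sin (2*w)) * (1 / (2*(cos w)^2))) at_top (at_left (pi/2))"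
    by (rule filterlim_tendsto_pos_mult_at_top[OF t _ l]) (use thpi in simp)
  then show ?thesis unfolding SS_def[abs_def] by simp
qed

lemma SS_surj: "\<exists>w. -pi/2 < w \<and> w < pi/2 \<and> SS w = s"
proof -
  have "eventually (\<lambda>w. SS w < s) (at_right (-pi/2))" using SS_lim_bot by (simp add: filterlim_at_bot_dense)
  then obtain b where b: "b > -pi/2" "\<And>y. y > -pi/2 \<Longrightarrow> y < b \<Longrightarrow> SS y < s"
    unfolding eventually_at_right_field by auto
  define m0 where "m0 = min b 0"
  have m: "-pi/2 < m0" "m0 \<le> 0" "m0 \<le> b" using b(1) pi_gt_zero unfolding m0_def by auto
  define w1 where "w1 = (-pi/2 + m0) / 2"
  have w1a: "-pi/2 < w1" unfolding w1_def using m by argo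
  have w1b: "w1 < 0" unfolding w1_def using m pi_gt_zero by argo
  have w1c: "w1 < b" unfolding w1_def using m by argo
  note w1 = w1a w1b w1c
  have w1': "SS w1 < s" using b(2) w1 by auto
  have "eventually (\<lambda>w. s < SS w) (at_left (pi/2))" using SS_lim_top by (simp add: filterlim_at_top_dense)
  then obtain c where c: "c < pi/2" "\<And>y. y > c \<Longrightarrow> y < pi/2 \<Longrightarrow> s < SS y"
    unfolding eventually_at_left_field by auto
  define m1 where "m1 = max c 0"
  have m2: "c \<le> m1" "0 \<le> m1" "m1 < pi/2" using c(1) pi_gt_zero unfolding m1_def by (auto simp: max_def)
  define w2 where "w2 = (m1 + pi/2) / 2"
  have w2a: "0 < w2" unfolding w2_def using m2 pi_gt_zero by argo
  have w2b: "w2 < pi/2" unfolding w2_def using m2 by argo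
  have w2c: "c < w2" unfolding w2_def using m2 by argo
  note w2 = w2a w2b w2c
  have w2': "s < SS w2" using c(2) w2 by auto
  have "continuous_on {w1..w2} SS"
    using SS_isCont w1 w2 by (intro continuous_at_imp_continuous_on) auto
  then obtain w where "w1 \<le> w" "w \<le> w2" "SS w = s"
    using IVT'[of SS w1 s w2] w1 w2 w1' w2' by auto
  then show ?thesis using w1 w2 by (intro exI[of _ w]) auto
qed

definition "WW s = (THE w. -pi/2 < w \<and> w < pi/2 \<and> SS w = s)"

lemma SS_inj: "-pi/2 < w1 \<Longrightarrow> w1 < pi/2 \<Longrightarrow> -pi/2 < w2 \<Longrightarrow> w2 < pi/2 \<Longrightarrow> SS w1 = SS w2 \<Longrightarrow> w1 = w2"
  using SS_mono by (metis less_irrefl linorder_neqE_linordered_idom)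

lemma WW: "-pi/2 < WW s \<and> WW s < pi/2 \<and> SS (WW s) = s"
proof -
  obtain w where w: "-pi/2 < w" "w < pi/2" "SS w = s" using SS_surj by blast
  have "WW s = w" unfolding WW_def using w SS_inj by (intro the_equality) auto
  then show ?thesis using w by simp
qed

lemma WW_SS: "-pi/2 < w \<Longrightarrow> w < pi/2 \<Longrightarrow> WW (SS w) = w"
  using WW[of "SS w"] SS_inj by blast

lemma WW_isCont: "isCont WW s"
proof -
  have w: "-pi/2 < WW s" "WW s < pi/2" using WW by auto
  define a where "a = (-pi/2 + WW s)/2"
  define b where "b = (pi/2 + WW s)/2"
  have "isCont WW (SS (WW s))"
    by (rule isCont_inverse_function2[of a "WW s" b]) (use w in \<open>auto simp: a_def b_def intro!: WW_SS SS_isCont\<close>)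
  then show ?thesis using WW by simp
qed

lemma WW_deriv: "(WW has_real_derivative (cos (WW s))^3 / KK (WW s)) (at s)"
proof -
  have w: "-pi/2 < WW s" "WW s < pi/2" using WW by auto
  have d: "(SS has_real_derivative KK (WW s) / (cos (WW s))^3) (at (WW s))" using SS_deriv w by auto
  have ne: "KK (WW s) / (cos (WW s))^3 \<noteq> 0" using KK_pos[OF w] cos_pos'[OF w] by simp
  have "(WW has_real_derivative inverse (KK (WW s) / (cos (WW s))^3)) (at s)"
    by (rule DERIV_inverse_function[where f=SS and g=WW, OF d ne, of "s-1" "s+1"]) (use WW WW_isCont in auto)
  then show ?thesis by simp
qed

end

context th begin

definition "HH s = (\<theta> - 2 * WW s) / cos (WW s)"

lemma HH_deriv: "(HH has_real_derivative - cos (WW s)) (at s)"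
proof -
  have w: "-pi/2 < WW s" "WW s < pi/2" using WW by auto
  have c: "0 < cos (WW s)" using cos_pos' w by auto
  have k: "0 < KK (WW s)" using KK_pos w by auto
  show ?thesis
    unfolding HH_def[abs_def]
    apply (rule derivative_eq_intros refl WW_deriv)+
    subgoal using c by simp
    subgoal using c k unfolding KK_def
      apply (simp add: divide_simps)
      by algebra
    done
qed

lemma HH_chain: "(f has_real_derivative f') (at t) \<Longrightarrow> ((\<lambda>t. HH (f t)) has_real_derivative - cos (WW (f t)) * f') (at t)"
  using DERIV_chain2[OF HH_deriv] by blast

lemma SS_0: "SS 0 = - \<theta>/2" unfolding SS_def by simp
lemma WW_m: "WW (- \<theta>/2) = 0" using WW_SS[of 0] SS_0 by simp
lemma HH_m: "HH (- \<theta>/2) = \<theta>" unfolding HH_def WW_m by simp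

lemma SS_half: "SS (\<theta>/2) = ss / cc"
proof -
  have "SS (\<theta>/2) = sin \<theta> / (2 * cc^2)" unfolding SS_def cc_def by simp
  also have "\<dots> = ss / cc" unfolding sin_th using cc_pos by (simp add: power2_eq_square)
  finally show ?thesis .
qed
lemma WW_half: "WW (ss/cc) = \<theta>/2" using WW_SS[of "\<theta>/2"] SS_half th0 thpi by simp
lemma HH_half: "HH (ss/cc) = 0" unfolding HH_def WW_half by simp

definition "DD x v = sqrt v * HH ((x - \<theta>/2) / v)"

lemma DD_start: "DD 0 1 = \<theta>" unfolding DD_def using HH_m by simp

lemma HH_isCont: "isCont HH s" using HH_deriv DERIV_isCont by blast

lemma alg2a:
  fixes q c s A w V' X' :: real
  assumes q: "0 < q" and c: "0 < c" and A: "A = ((2*w - \<theta> + 2 * s * c) / (2 * c^2)) * q^2"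
  shows "inverse q / 2 * V' * ((\<theta> - 2*w) / c) + - c * (((X' - 0) * q^2 - A * V') / (q^2 * q^2)) * q
       = (- c * X' + s * V') / q"
  unfolding A using q c
  apply (simp add: divide_simps)
  by algebra

lemma alg2:
  fixes Vt c s A w V' X' :: real
  assumes q: "0 < Vt" and c: "0 < c" and A: "A = ((2*w - \<theta> + 2 * s * c) / (2 * c^2)) * Vt"
  shows "inverse (sqrt Vt) / 2 * V' * ((\<theta> - 2*w) / c) + - c * (((X' - 0) * Vt - A * V') / (Vt * Vt)) * sqrt Vt
       = (- c * X' + s * V') / sqrt Vt"
proof -
  have e: "Vt = (sqrt Vt)^2" using q by simp
  have "0 < sqrt Vt" using q by simp
  from alg2a[OF this c, of A w s V' X'] A e show ?thesis by metis
qed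

lemma DD_chain:
  assumes dX: "(X has_real_derivative X') (at t)" and dV: "(V has_real_derivative V') (at t)"
    and pos: "0 < V t"
  shows "((\<lambda>t. DD (X t) (V t)) has_real_derivative
           (- cos (WW ((X t - \<theta>/2) / V t)) * X' + sin (WW ((X t - \<theta>/2) / V t)) * V') / sqrt (V t)) (at t)"
proof -
  have d1: "((\<lambda>t. sqrt (V t)) has_real_derivative inverse (sqrt (V t)) / 2 * V') (at t)"
    using DERIV_chain2[OF DERIV_real_sqrt[OF pos] dV] .
  have d2: "((\<lambda>t. (X t - \<theta>/2) / V t) has_real_derivative ((X' - 0) * V t - (X t - \<theta>/2) * V') / (V t * V t)) (at t)"
    by (rule DERIV_divide[OF DERIV_diff[OF dX DERIV_const] dV]) (use pos in simp)
  note d3 = HH_chain[OF d2]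
  note d4 = DERIV_mult[OF d1 d3]
  define w where "w = WW ((X t - \<theta>/2) / V t)"
  define q where "q = sqrt (V t)"
  have q: "0 < q" "V t = q^2" unfolding q_def using pos by auto
  have c: "0 < cos w" unfolding w_def using cos_pos' WW by auto
  have S: "SS w = (X t - \<theta>/2) / V t" unfolding w_def using WW by simp
  have eq: "inverse (sqrt (V t)) / 2 * V' * HH ((X t - \<theta>/2) / V t) +
      - cos (WW ((X t - \<theta>/2) / V t)) * (((X' - 0) * V t - (X t - \<theta>/2) * V') / (V t * V t)) * sqrt (V t)
      = (- cos (WW ((X t - \<theta>/2) / V t)) * X' + sin (WW ((X t - \<theta>/2) / V t)) * V') / sqrt (V t)"
    unfolding HH_def w_def[symmetric]
  proof (rule alg2[OF pos c])
    show "X t - \<theta>/2 = ((2*w - \<theta> + 2 * sin w * cos w) / (2 * (cos w)^2)) * V t"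
      using S pos unfolding SS_def sin_double by simp
  qed
  show ?thesis unfolding DD_def using d4 unfolding eq .
qed

end

lemma vd_fst: "(g has_vector_derivative d) (at t) \<Longrightarrow> ((\<lambda>t. fst (g t)) has_real_derivative fst d) (at t)"
proof -
  assume a: "(g has_vector_derivative d) (at t)"
  have e: "(\<lambda>x::real. x * fst d) = (*) (fst d)" by (rule ext) (simp add: mult.commute)
  show ?thesis using has_derivative_fst[of g "\<lambda>h. h *\<^sub>R d" "at t"] a e
    unfolding has_vector_derivative_def has_field_derivative_def by simp
qed

lemma vd_snd: "(g has_vector_derivative d) (at t) \<Longrightarrow> ((\<lambda>t. snd (g t)) has_real_derivative snd d) (at t)"
proof -
  assume a: "(g has_vector_derivative d) (at t)"
  have e: "(\<lambda>x::real. x * snd d) = (*) (snd d)" by (rule ext) (simp add: mult.commute)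
  show ?thesis using has_derivative_snd[of g "\<lambda>h. h *\<^sub>R d" "at t"] a e
    unfolding has_vector_derivative_def has_field_derivative_def by simp
qed

lemma cs_bound: "\<bar>a * x + b * y\<bar> \<le> sqrt (a^2 + b^2) * sqrt (x^2 + (y::real)^2)"
proof -
  have "(a * x + b * y)^2 \<le> (a^2 + b^2) * (x^2 + y^2)"
    using sum_squares_ge_zero[of "a*y - b*x" 0] by (simp add: power2_eq_square algebra_simps)
  then have "sqrt ((a * x + b * y)^2) \<le> sqrt ((a^2 + b^2) * (x^2 + y^2))" by (rule real_sqrt_le_mono)
  then show ?thesis by (simp add: real_sqrt_mult)
qed

context th begin

lemma HH_cont: "continuous_on S HH"
  using HH_isCont by (intro continuous_at_imp_continuous_on) auto

lemma lower_eps: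
  assumes gpc: "g piecewise_C1_differentiable_on {0..1}" and gH: "\<forall>t\<in>{0..1}. g t \<in> Hplane"
    and eps: "0 < \<epsilon>"
  shows "ennreal (DD (fst (g 0)) (snd (g 0) + \<epsilon>) - DD (fst (g 1)) (snd (g 1) + \<epsilon>)) \<le> hlen g"
proof -
  obtain K where cont: "continuous_on {0..1} g" and K: "finite K" and C1: "g C1_differentiable_on ({0..1} - K)"
    using gpc unfolding piecewise_C1_differentiable_on_def by blast
  have diff: "\<And>t. t \<in> {0..1} - K \<Longrightarrow> g differentiable (at t)"
    using C1 unfolding C1_differentiable_on_eq by blast
  define X where "X t = fst (g t)" for t
  define V where "V t = snd (g t) + \<epsilon>" for t
  have v0: "\<And>t. t \<in> {0..1} \<Longrightarrow> 0 \<le> snd (g t)" using gH unfolding Hplane_def by auto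
  have Vpos: "\<And>t. t \<in> {0..1} \<Longrightarrow> 0 < V t" unfolding V_def using v0 eps by (simp add: add_nonneg_pos)
  define Fp where "Fp t = (- cos (WW ((X t - \<theta>/2) / V t)) * fst (vector_derivative g (at t))
      + sin (WW ((X t - \<theta>/2) / V t)) * snd (vector_derivative g (at t))) / sqrt (V t)" for t
  define F where "F t = DD (X t) (V t)" for t
  have deriv: "(F has_vector_derivative Fp t) (at t)" if t: "t \<in> {0<..<1} - K" for t
  proof -
    have gd: "(g has_vector_derivative vector_derivative g (at t)) (at t)"
      using diff[of t] t vector_derivative_works by auto
    have dX: "(X has_real_derivative fst (vector_derivative g (at t))) (at t)"
      unfolding X_def[abs_def] by (rule vd_fst[OF gd])
    have dV0: "((\<lambda>t. snd (g t)) has_real_derivative snd (vector_derivative g (at t))) (at t)"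
      by (rule vd_snd[OF gd])
    have dV: "(V has_real_derivative snd (vector_derivative g (at t)) + 0) (at t)"
      unfolding V_def[abs_def] by (rule DERIV_add[OF dV0 DERIV_const])
    have "(F has_real_derivative Fp t) (at t)"
      unfolding F_def[abs_def] Fp_def using DD_chain[OF dX dV] Vpos[of t] t by simp
    then show ?thesis by (simp add: has_real_derivative_iff_has_vector_derivative)
  qed
  have contF: "continuous_on {0..1} F"
  proof -
    have cX: "continuous_on {0..1} X" unfolding X_def[abs_def] by (intro continuous_intros cont)
    have cV: "continuous_on {0..1} V" unfolding V_def[abs_def] by (intro continuous_intros cont)
    have cs: "continuous_on {0..1} (\<lambda>t. (X t - \<theta>/2) / V t)"
      using Vpos by (intro continuous_intros cX cV) (auto simp: less_imp_neq[symmetric])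
    have cH: "continuous_on {0..1} (\<lambda>t. HH ((X t - \<theta>/2) / V t))"
      by (rule continuous_on_compose2[OF HH_cont cs]) auto
    show ?thesis unfolding F_def[abs_def] DD_def by (intro continuous_intros cV cH)
  qed
  have ftc: "(Fp has_integral (F 1 - F 0)) {0..1}"
    by (rule fundamental_theorem_of_calculus_interior_strong[OF K _ _ contF]) (use deriv in auto)
  have ftc': "((\<lambda>t. - Fp t) has_integral (F 0 - F 1)) {0..1}"
    using has_integral_neg[OF ftc] by simp
  define W where "W t = (let d = vector_derivative g (at t); v = snd (g t) in
        if v > 0 then ennreal (norm d / sqrt v) else if d = 0 then 0 else \<infinity>)" for t
  have bound: "ennreal (- Fp t) \<le> W t" if t: "t \<in> {0..1} - (K \<union> {0,1})" for t
  proof -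
    define d where "d = vector_derivative g (at t)"
    define w where "w = WW ((X t - \<theta>/2) / V t)"
    have Fpt: "Fp t = (- cos w * fst d + sin w * snd d) / sqrt (V t)" unfolding Fp_def d_def w_def ..
    have nd: "norm d = sqrt ((fst d)^2 + (snd d)^2)" by (cases d) (simp add: norm_Pair)
    have tt: "t \<in> {0..1}" using t by auto
    consider "0 < snd (g t)" | "snd (g t) = 0" "d = 0" | "snd (g t) = 0" "d \<noteq> 0" using v0[OF tt] by force
    then show ?thesis
    proof cases
      case 1
      have sV: "0 < sqrt (V t)" using Vpos[OF tt] by simp
      have "- Fp t = (cos w * fst d + (- sin w) * snd d) / sqrt (V t)" unfolding Fpt by (simp add: minus_divide_left algebra_simps)
      also have "\<dots> \<le> \<bar>cos w * fst d + (- sin w) * snd d\<bar> / sqrt (V t)"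
        using sV by (simp add: divide_right_mono)
      also have "\<dots> \<le> norm d / sqrt (V t)"
        using cs_bound[of "cos w" "fst d" "- sin w" "snd d"] sV unfolding nd by (simp add: divide_right_mono)
      also have "\<dots> \<le> norm d / sqrt (snd (g t))"
        using 1 unfolding V_def using eps by (intro divide_left_mono) (auto intro: mult_pos_pos)
      finally have "- Fp t \<le> norm d / sqrt (snd (g t))" .
      then show ?thesis unfolding W_def Let_def d_def[symmetric] using 1 by (simp add: ennreal_leI)
    next
      case 2
      then have "Fp t = 0" unfolding Fpt by simp
      then show ?thesis by simp
    next
      case 3
      then show ?thesis unfolding W_def Let_def d_def[symmetric] by simp
    qed
  qed
  have "ennreal (F 0 - F 1) \<le> (\<integral>\<^sup>+ t \<in> {0..1}. W t \<partial>lborel)"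
    by (rule hk_le_nn[OF ftc', of "K \<union> {0,1}"]) (use K bound in auto)
  also have "\<dots> = hlen g" unfolding hlen_def W_def ..
  finally show ?thesis unfolding F_def X_def V_def .
qed

end

context th begin

lemma HH_tendsto: "(f \<longlongrightarrow> a) F \<Longrightarrow> ((\<lambda>x. HH (f x)) \<longlongrightarrow> HH a) F"
  using HH_isCont isCont_tendsto_compose by blast

lemma tan_eq: "tan (\<theta>/2) = ss / cc" unfolding ss_def cc_def tan_def ..

lemma lower:
  assumes gpc: "g piecewise_C1_differentiable_on {0..1}" and gH: "\<forall>t\<in>{0..1}. g t \<in> Hplane"
    and g0: "g 0 = (0, 1)" and g1: "g 1 \<in> Lline (\<theta>/2) (tan (\<theta>/2))"
  shows "ennreal \<theta> \<le> hlen g"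
proof (cases "hlen g = \<infinity>")
  case True then show ?thesis by simp
next
  case False
  then obtain L where L: "hlen g = ennreal L" "0 \<le> L"
    by (cases "hlen g" rule: ennreal_cases) auto
  define p1 where "p1 = fst (g 1)"
  define p2 where "p2 = snd (g 1)"
  have p: "0 \<le> p2" "p1 = \<theta>/2 + ss/cc * p2" using g1 unfolding Lline_def p1_def p2_def tan_eq by auto
  have le: "DD 0 (1 + e) - DD p1 (p2 + e) \<le> L" if e: "0 < e" for e
    using lower_eps[OF gpc gH e] unfolding g0 L p1_def p2_def using L(2) by simp
  have t1: "((\<lambda>e. DD 0 (1 + e)) \<longlongrightarrow> \<theta>) (at_right 0)"
  proof -
    have "((\<lambda>e. sqrt (1 + e) * HH ((0 - \<theta>/2) / (1 + e))) \<longlongrightarrow> sqrt (1 + 0) * HH ((0 - \<theta>/2) / (1 + 0))) (at_right 0)"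
      by (intro tendsto_intros HH_tendsto) auto
    then show ?thesis unfolding DD_def using HH_m by simp
  qed
  have t2: "((\<lambda>e. DD p1 (p2 + e)) \<longlongrightarrow> 0) (at_right 0)"
  proof (cases "p2 = 0")
    case True
    have z: "p1 - \<theta>/2 = 0" using p True by simp
    have eq: "\<And>e. DD p1 (p2 + e) = sqrt e * HH 0" unfolding DD_def True z by simp
    have "((\<lambda>e. sqrt e * HH 0) \<longlongrightarrow> sqrt 0 * HH 0) (at_right 0)"
      by (intro tendsto_intros) 
    then show ?thesis unfolding eq by simp
  next
    case False
    then have p2: "0 < p2" using p by simp
    have "((\<lambda>e. sqrt (p2 + e) * HH ((p1 - \<theta>/2) / (p2 + e))) \<longlongrightarrow> sqrt (p2 + 0) * HH ((p1 - \<theta>/2) / (p2 + 0))) (at_right 0)"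
      using p2 by (intro tendsto_intros HH_tendsto) auto
    moreover have "(p1 - \<theta>/2) / (p2 + 0) = ss / cc" using p p2 by simp
    ultimately show ?thesis unfolding DD_def using HH_half by simp
  qed
  have "\<theta> - 0 \<le> L"
  proof (rule tendsto_le[of "at_right (0::real)" "\<lambda>_. L" L "\<lambda>e. DD 0 (1 + e) - DD p1 (p2 + e)"])
    show "((\<lambda>e. DD 0 (1 + e) - DD p1 (p2 + e)) \<longlongrightarrow> \<theta> - 0) (at_right 0)"
      by (intro tendsto_intros t1 t2)
    show "eventually (\<lambda>e. DD 0 (1 + e) - DD p1 (p2 + e) \<le> L) (at_right 0)"
      unfolding eventually_at_right_field using le by (intro exI[of _ 1]) auto
  qed auto
  then show ?thesis using L by simp
qed

end

context th begin

definition "gam t = ((\<theta> * t + sin (\<theta> * t)) / 2, (1 + cos (\<theta> * t)) / 2)"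
definition "D1 t = \<theta> * (1 + cos (\<theta> * t)) / 2"
definition "D2 t = - (\<theta> * sin (\<theta> * t)) / 2"

lemma gam_deriv: "(gam has_vector_derivative (D1 t, D2 t)) (at t)"
proof -
  have a: "((\<lambda>t. (\<theta> * t + sin (\<theta> * t)) / 2) has_real_derivative D1 t) (at t)"
    unfolding D1_def by (auto intro!: derivative_eq_intros simp: algebra_simps)
  have b: "((\<lambda>t. (1 + cos (\<theta> * t)) / 2) has_real_derivative D2 t) (at t)"
    unfolding D2_def by (auto intro!: derivative_eq_intros simp: algebra_simps)
  show ?thesis unfolding gam_def[abs_def]
    by (rule has_vector_derivative_Pair) (use a b in \<open>auto simp: has_real_derivative_iff_has_vector_derivative\<close>)
qed

lemma gam_pc: "gam piecewise_C1_differentiable_on {0..1}"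
proof (rule C1_differentiable_imp_piecewise)
  show "gam C1_differentiable_on {0..1}" unfolding C1_differentiable_on_def
    by (intro exI[of _ "\<lambda>t. (D1 t, D2 t)"] conjI ballI gam_deriv)
       (auto simp: D1_def D2_def intro!: continuous_intros)
qed

lemma gam0: "gam 0 = (0, 1)" unfolding gam_def by simp
lemma gam1: "gam 1 = Ptheta \<theta>"
proof -
  have "cos \<theta> = 2 * (cos (\<theta>/2))^2 - 1" using cos_double[of "\<theta>/2"] by (simp add: sin_squared_eq)
  then show ?thesis unfolding gam_def Ptheta_def by simp
qed

lemma gam_v: assumes "t \<in> {0..1}" shows "0 < (1 + cos (\<theta> * t)) / 2"
proof -
  have t: "0 \<le> t" "t \<le> 1" using assms by auto
  have a: "0 \<le> \<theta> * t" using t th0 by simp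
  have "\<theta> * t \<le> \<theta>" using mult_left_le[OF t(2), of \<theta>] th0 by simp
  then have b: "\<theta> * t < pi" using thpi by linarith
  note a b
  then have "cos pi < cos (\<theta> * t)" by (intro cos_monotone_0_pi) auto
  then show ?thesis by simp
qed

lemma gam_H: "\<forall>t\<in>{0..1}. gam t \<in> Hplane"
  using gam_v unfolding Hplane_def gam_def by (auto simp: less_imp_le)

lemma gam_norm: assumes "t \<in> {0..1}"
  shows "norm (D1 t, D2 t) / sqrt ((1 + cos (\<theta> * t)) / 2) = \<theta>"
proof -
  define c where "c = cos (\<theta> * t)"
  define s where "s = sin (\<theta> * t)"
  have sc: "s^2 + c^2 = 1" unfolding s_def c_def by simp
  have v: "0 < (1 + c) / 2" using gam_v[OF assms] unfolding c_def .
  have "(D1 t)^2 + (D2 t)^2 = \<theta>^2 * ((1 + c) / 2)"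
    unfolding D1_def D2_def c_def[symmetric] s_def[symmetric]
    using sc by (simp add: power2_eq_square field_simps) algebra
  then have "norm (D1 t, D2 t) = sqrt (\<theta>^2 * ((1 + c) / 2))" by (simp add: norm_Pair)
  also have "\<dots> = \<theta> * sqrt ((1 + c) / 2)" by (subst real_sqrt_mult) (use th0 in simp)
  finally show ?thesis unfolding c_def[symmetric] using v by simp
qed

lemma hlen_gam: "hlen gam = ennreal \<theta>"
proof -
  have "hlen gam = (\<integral>\<^sup>+ t. ennreal \<theta> * indicator {0..1::real} t \<partial>lborel)"
    unfolding hlen_def
  proof (rule nn_integral_cong)
    fix t :: real
    show "(let d = vector_derivative gam (at t); v = snd (gam t) in
            if v > 0 then ennreal (norm d / sqrt v) else if d = 0 then 0 else \<infinity>) * indicator {0..1} t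
          = ennreal \<theta> * indicator {0..1::real} t"
    proof (cases "t \<in> {0..1}")
      case True
      have vd: "vector_derivative gam (at t) = (D1 t, D2 t)" by (rule vector_derivative_at[OF gam_deriv])
      have sg: "snd (gam t) = (1 + cos (\<theta> * t)) / 2" unfolding gam_def by simp
      show ?thesis unfolding Let_def vd sg using True gam_v[OF True] gam_norm[OF True] by simp
    qed simp
  qed
  also have "\<dots> = ennreal \<theta>" by (simp add: nn_integral_cmult_indicator)
  finally show ?thesis .
qed

lemma P_line: "Ptheta \<theta> \<in> Lline (\<theta>/2) (tan (\<theta>/2))"
proof -
  have "tan (\<theta>/2) * cc^2 = ss * cc" unfolding tan_eq using cc_pos by (simp add: power2_eq_square)
  then show ?thesis unfolding Lline_def Ptheta_def using xP_eq unfolding xP_def cc_def[symmetric] by auto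
qed

lemma INF_eq: "(INF P \<in> Lline (\<theta>/2) (tan (\<theta>/2)). dH (0, 1) P) = ennreal \<theta>"
proof (rule antisym)
  have "dH (0, 1) (Ptheta \<theta>) \<le> hlen gam"
    unfolding dH_def by (rule INF_lower) (use gam_pc gam0 gam1 gam_H in auto)
  then have "dH (0, 1) (Ptheta \<theta>) \<le> ennreal \<theta>" using hlen_gam by simp
  then show "(INF P \<in> Lline (\<theta>/2) (tan (\<theta>/2)). dH (0, 1) P) \<le> ennreal \<theta>"
    using P_line by (meson INF_lower2)
next
  show "ennreal \<theta> \<le> (INF P \<in> Lline (\<theta>/2) (tan (\<theta>/2)). dH (0, 1) P)"
  proof (rule INF_greatest)
    fix P assume P: "P \<in> Lline (\<theta>/2) (tan (\<theta>/2))"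
    show "ennreal \<theta> \<le> dH (0, 1) P" unfolding dH_def
      by (rule INF_greatest) (use lower P in auto)
  qed
qed

end

theorem theorem5p1:
  fixes \<theta> :: real
  assumes "0 < \<theta>" and "\<theta> < pi"
  shows "Ptheta \<theta> \<in> Gamma \<theta>
    \<and> Gamma_fun \<theta> differentiable (at (fst (Ptheta \<theta>)))
    \<and> (INF P \<in> tangent_line \<theta> \<inter> Hplane. dH (0, 1) P) = ennreal \<theta>
    \<and> tangent_line \<theta> \<inter> Hplane = Lline (\<theta>/2) (tan (\<theta>/2))"
proof -
  interpret th \<theta> using assms by unfold_locales
  show ?thesis using Ptheta_Gamma diff_G tangent_eq INF_eq by simp
qed

end
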